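(* Let $\pi_0$ be a portfolio map generated by $\Phi_0$, and let $p_0\in\Delta_n$ be a point at which $\Phi_0$ is differentiable. For every $\epsilon>0$ and every compact neighborhood $K$ of $p_0$ in $\Delta_n$, there exists $\delta>0$ such that whenever $\pi$ is a portfolio map generated by $\Phi$ with $\max_{p\in K}|\Phi(p)-\Phi_0(p)|<\delta$, we have $\sup_{p\in\Delta_n:|p-p_0|<\delta}|\pi(p)-\pi_0(p_0)|<\epsilon$.
   Context: $\Delta_n=\{p\in(0,1)^n:\sum p_i=1\}$, $\overline{\Delta}_n$ its closure, $n\ge2$; $|\cdot|$ is the Euclidean norm. A map $\pi:\Delta_n\to\overline{\Delta}_n$ is generated by a concave function $\Phi:\Delta_n\to(0,\infty)$ if $\sum_i\pi_i(p)\frac{q_i}{p_i}\ge\frac{\Phi(q)}{\Phi(p)}$ for all $p,q\in\Delta_n$. *)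

theory Defs
  imports "HOL-Analysis.Analysis"
begin

definition std_simplex :: "(real ^ 'n) set" where
  "std_simplex = {p. (\<forall>i. 0 < p $ i \<and> p $ i < 1) \<and> (\<Sum>i\<in>UNIV. p $ i) = 1}"

definition std_simplex_cl :: "(real ^ 'n) set" where
  "std_simplex_cl = {p. (\<forall>i. 0 \<le> p $ i) \<and> (\<Sum>i\<in>UNIV. p $ i) = 1}"

definition generated_by :: "(real ^ 'n \<Rightarrow> real ^ 'n) \<Rightarrow> (real ^ 'n \<Rightarrow> real) \<Rightarrow> bool" where
  "generated_by \<pi> \<Phi> \<longleftrightarrow>
     (\<forall>p\<in>std_simplex. \<pi> p \<in> std_simplex_cl) \<and>
     concave_on std_simplex \<Phi> \<and>
     (\<forall>p\<in>std_simplex. 0 < \<Phi> p) \<and>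
     (\<forall>p\<in>std_simplex. \<forall>q\<in>std_simplex.
        (\<Sum>i\<in>UNIV. \<pi> p $ i * (q $ i / p $ i)) \<ge> \<Phi> q / \<Phi> p)"

end

theory Submission
  imports Defs
begin
lemma gen_pi_bounds:
  assumes "generated_by \<pi> \<Phi>" "p \<in> std_simplex"
  shows "0 \<le> \<pi> p $ k" "\<pi> p $ k \<le> 1" "(\<Sum>i\<in>UNIV. \<pi> p $ i) = 1"
proof -
  have cl: "\<pi> p \<in> std_simplex_cl" using assms unfolding generated_by_def by auto
  then show 0: "0 \<le> \<pi> p $ k" and s: "(\<Sum>i\<in>UNIV. \<pi> p $ i) = 1" unfolding std_simplex_cl_def by auto
  have "\<pi> p $ k \<le> (\<Sum>i\<in>UNIV. \<pi> p $ i)"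
    by (rule member_le_sum) (use cl in \<open>auto simp: std_simplex_cl_def\<close>)
  then show "\<pi> p $ k \<le> 1" using s by simp
qed

lemma gen_ineq:
  assumes "generated_by \<pi> \<Phi>" "p \<in> std_simplex" "q \<in> std_simplex"
  shows "\<Phi> q \<le> (\<Sum>k\<in>UNIV. (\<Phi> p * \<pi> p $ k / p $ k) * q $ k)"
proof -
  have pos: "\<Phi> p > 0" using assms unfolding generated_by_def by auto
  have "\<Phi> q / \<Phi> p \<le> (\<Sum>i\<in>UNIV. \<pi> p $ i * (q $ i / p $ i))"
    using assms unfolding generated_by_def by auto
  then have "\<Phi> q \<le> \<Phi> p * (\<Sum>i\<in>UNIV. \<pi> p $ i * (q $ i / p $ i))"
    using pos by (simp add: divide_le_eq mult.commute)
  also have "\<dots> = (\<Sum>k\<in>UNIV. (\<Phi> p * \<pi> p $ k / p $ k) * q $ k)"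
    by (simp add: sum_distrib_left algebra_simps)
  finally show ?thesis .
qed

lemma gen_sum:
  assumes "generated_by \<pi> \<Phi>" "p \<in> std_simplex"
  shows "(\<Sum>k\<in>UNIV. p $ k * (\<Phi> p * \<pi> p $ k / p $ k)) = \<Phi> p"
proof -
  have "\<And>k. p $ k \<noteq> 0" using assms(2) unfolding std_simplex_def by (auto simp: less_imp_neq[symmetric])
  then have "(\<Sum>k\<in>UNIV. p $ k * (\<Phi> p * \<pi> p $ k / p $ k)) = (\<Sum>k\<in>UNIV. \<Phi> p * \<pi> p $ k)"
    by (intro sum.cong) auto
  also have "\<dots> = \<Phi> p" using gen_pi_bounds(3)[OF assms] by (simp add: sum_distrib_left[symmetric])
  finally show ?thesis .
qed

lemma sum_axis_shift:
  fixes f :: "'n::finite \<Rightarrow> real"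
  shows "(\<Sum>k\<in>UNIV. f k * (p + s *\<^sub>R (axis i 1 - axis j 1)) $ k) = (\<Sum>k\<in>UNIV. f k * p $ k) + s * (f i - f j)"
proof -
  have ax: "(\<Sum>k\<in>UNIV. f k * axis i 1 $ k) = f i" for i
    by (simp add: axis_def if_distrib cong: if_cong)
  have "(\<Sum>k\<in>UNIV. f k * (p + s *\<^sub>R (axis i 1 - axis j 1)) $ k)
     = (\<Sum>k\<in>UNIV. f k * p $ k + s * (f k * axis i 1 $ k) - s * (f k * axis j 1 $ k))"
    by (intro sum.cong refl) (simp add: algebra_simps)
  also have "\<dots> = (\<Sum>k\<in>UNIV. f k * p $ k) + s * (\<Sum>k\<in>UNIV. f k * axis i 1 $ k) - s * (\<Sum>k\<in>UNIV. f k * axis j 1 $ k)"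
    by (simp add: sum.distrib sum_subtractf sum_distrib_left)
  finally show ?thesis by (simp add: ax algebra_simps)
qed

lemma simplex_shift:
  assumes "p \<in> std_simplex" "\<And>k. \<bar>s\<bar> < p $ k \<and> \<bar>s\<bar> < 1 - p $ k"
  shows "p + s *\<^sub>R (axis i 1 - axis j (1::real)) \<in> std_simplex"
proof -
  have a: "0 < (p + s *\<^sub>R (axis i 1 - axis j 1)) $ k \<and> (p + s *\<^sub>R (axis i 1 - axis j 1)) $ k < 1" for k
    using assms(2)[of k] by (auto simp: axis_def abs_less_iff)
  have "(\<Sum>k\<in>UNIV. 1 * (p + s *\<^sub>R (axis i 1 - axis j 1)) $ k) = (\<Sum>k\<in>UNIV. 1 * p $ k) + s * (1 - 1)"
    by (rule sum_axis_shift)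
  then show ?thesis using a assms(1) unfolding std_simplex_def by auto
qed

lemma norm_axis_diff: "norm (axis i 1 - axis j (1::real) :: real^'n) \<le> 2"
  using norm_triangle_ineq4[of "axis i (1::real)" "axis j 1"] by simp

lemma simplex_margin:
  assumes "p \<in> std_simplex"
  shows "\<exists>m>0. \<forall>k. m \<le> p $ k \<and> m \<le> 1 - p $ k"
proof -
  let ?m = "Min (range (\<lambda>k. min (p $ k) (1 - p $ k)))"
  have "?m \<in> range (\<lambda>k. min (p $ k) (1 - p $ k))" by (intro Min_in) auto
  then have "?m > 0" using assms unfolding std_simplex_def by auto
  moreover have "\<forall>k. ?m \<le> p $ k \<and> ?m \<le> 1 - p $ k"
  proof
    fix k
    have "?m \<le> min (p $ k) (1 - p $ k)" by (rule Min_le) auto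
    then show "?m \<le> p $ k \<and> ?m \<le> 1 - p $ k" by simp
  qed
  ultimately show ?thesis by blast
qed

lemma core:
  fixes \<pi>s :: "nat \<Rightarrow> real^'n \<Rightarrow> real^'n" and \<Phi>s :: "nat \<Rightarrow> real^'n \<Rightarrow> real"
    and ps :: "nat \<Rightarrow> real^'n" and \<Phi>0 :: "real^'n \<Rightarrow> real"
  assumes p0: "p0 \<in> std_simplex"
    and der: "(\<Phi>0 has_derivative L) (at p0 within std_simplex)"
    and \<Phi>0pos: "\<Phi>0 p0 > 0"
    and r: "r > 0"
    and gen: "\<And>m. generated_by (\<pi>s m) (\<Phi>s m)"
    and close: "\<And>m q. q \<in> ball p0 r \<inter> std_simplex \<Longrightarrow> \<bar>\<Phi>s m q - \<Phi>0 q\<bar> < inverse (real (Suc m))"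
    and ps: "\<And>m. ps m \<in> std_simplex" and lim: "ps \<longlonglongrightarrow> p0"
  shows "(\<lambda>m. \<pi>s m (ps m)) \<longlonglongrightarrow>
     (\<chi> k. p0$k * (\<Phi>0 p0 - (\<Sum>i\<in>UNIV. p0$i * L (axis i 1 - axis k 1))) / \<Phi>0 p0)"
proof -
  define c where "c m k = \<Phi>s m (ps m) * \<pi>s m (ps m) $ k / ps m $ k" for m k
  have pspos: "ps m $ k > 0" for m k using ps[of m] unfolding std_simplex_def by auto
  have p0pos: "p0 $ k > 0" for k using p0 unfolding std_simplex_def by auto
  have \<Phi>spos: "\<Phi>s m (ps m) > 0" for m using gen[of m] ps[of m] unfolding generated_by_def by auto
  have cont: "continuous (at p0 within std_simplex) \<Phi>0"
    using der by (rule has_derivative_continuous)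
  have \<Phi>0ps: "(\<lambda>m. \<Phi>0 (ps m)) \<longlonglongrightarrow> \<Phi>0 p0"
    by (rule continuous_within_tendsto_compose[OF cont _ lim]) (use ps in auto)
  have evball: "eventually (\<lambda>m. ps m \<in> ball p0 r) sequentially"
    using lim r by (intro topological_tendstoD) auto
  have "(\<lambda>m. \<Phi>s m (ps m) - \<Phi>0 (ps m)) \<longlonglongrightarrow> 0"
  proof (rule Lim_null_comparison[OF _ LIMSEQ_inverse_real_of_nat])
    show "eventually (\<lambda>m. norm (\<Phi>s m (ps m) - \<Phi>0 (ps m)) \<le> inverse (real (Suc m))) sequentially"
      using evball by (rule eventually_mono) (metis IntI close ps less_imp_le real_norm_def)
  qed
  from tendsto_add[OF this \<Phi>0ps] have \<Phi>F: "(\<lambda>m. \<Phi>s m (ps m)) \<longlonglongrightarrow> \<Phi>0 p0" by simp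
  have pk: "(\<lambda>m. ps m $ k) \<longlonglongrightarrow> p0 $ k" for k using lim by (rule tendsto_vec_nth)
  have S0: "(\<lambda>m. \<Sum>k\<in>UNIV. c m k * (p0$k - ps m $ k)) \<longlonglongrightarrow> 0"
  proof (rule tendsto_null_sum)
    fix k
    have g: "(\<lambda>m. \<Phi>s m (ps m) / ps m $ k * \<bar>p0$k - ps m $ k\<bar>) \<longlonglongrightarrow> \<Phi>0 p0 / p0 $ k * \<bar>p0$k - p0 $ k\<bar>"
      using p0pos[of k] by (intro tendsto_intros \<Phi>F pk) auto
    show "(\<lambda>m. c m k * (p0$k - ps m $ k)) \<longlonglongrightarrow> 0"
    proof (rule Lim_null_comparison)
      show "(\<lambda>m. \<Phi>s m (ps m) / ps m $ k * \<bar>p0$k - ps m $ k\<bar>) \<longlonglongrightarrow> 0" using g by simp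
      show "eventually (\<lambda>m. norm (c m k * (p0$k - ps m $ k)) \<le> \<Phi>s m (ps m) / ps m $ k * \<bar>p0$k - ps m $ k\<bar>) sequentially"
      proof (rule always_eventually, intro allI)
        fix m
        have b0: "0 \<le> \<pi>s m (ps m) $ k" "\<pi>s m (ps m) $ k \<le> 1" using gen_pi_bounds[OF gen ps] by auto
        have "0 \<le> c m k" "c m k \<le> \<Phi>s m (ps m) / ps m $ k"
          unfolding c_def using b0 \<Phi>spos[of m] pspos[of m k]
          by (auto simp: divide_le_eq_1 intro!: divide_right_mono mult_left_le)
        then show "norm (c m k * (p0$k - ps m $ k)) \<le> \<Phi>s m (ps m) / ps m $ k * \<bar>p0$k - ps m $ k\<bar>"
          by (simp add: abs_mult mult_right_mono del: times_divide_eq_left times_divide_eq_right)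
      qed
    qed
  qed
  define \<eta> where "\<eta> m = \<bar>\<Phi>s m (ps m) - \<Phi>0 p0\<bar> + \<bar>\<Sum>k\<in>UNIV. c m k * (p0$k - ps m $ k)\<bar> + inverse (real (Suc m))" for m
  have \<eta>0: "\<eta> \<longlonglongrightarrow> 0"
  proof -
    have a: "(\<lambda>m. \<Phi>s m (ps m) - \<Phi>0 p0) \<longlonglongrightarrow> 0" using \<Phi>F by (simp add: LIM_zero)
    show ?thesis unfolding \<eta>_def
      using tendsto_add[OF tendsto_add[OF tendsto_rabs_zero[OF a] tendsto_rabs_zero[OF S0]] LIMSEQ_inverse_real_of_nat]
      by simp
  qed
  have lin: "linear L" using der by (auto dest: has_derivative_linear)
  have D: "(\<lambda>m. c m i - c m j) \<longlonglongrightarrow> L (axis i 1 - axis j 1)" for i j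
  proof -
    define v where "v = (axis i 1 - axis j 1 :: real^'n)"
    show ?thesis unfolding tendsto_iff dist_real_def v_def[symmetric]
    proof (intro allI impI)
      fix \<gamma> :: real assume \<gamma>: "\<gamma> > 0"
      obtain d where d: "d > 0" and dd: "\<forall>y\<in>std_simplex. norm (y - p0) < d \<longrightarrow>
          norm (\<Phi>0 y - \<Phi>0 p0 - L (y - p0)) \<le> \<gamma>/8 * norm (y - p0)"
        using der \<gamma> unfolding has_derivative_within_alt by (meson divide_pos_pos zero_less_numeral)
      obtain mg where mg: "mg > 0" "\<forall>k. mg \<le> p0$k \<and> mg \<le> 1 - p0$k"
        using simplex_margin[OF p0] by blast
      define t where "t = min (mg/2) (min (d/4) (r/4))"
      have t: "t > 0" "t < mg" "2*t < d" "2*t < r" using mg d r unfolding t_def by auto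
      have key: "eventually (\<lambda>m. \<sigma> * (c m i - c m j - L v) > -\<gamma>/2) sequentially"
        if \<sigma>: "\<sigma> = 1 \<or> \<sigma> = -1" for \<sigma>
      proof -
        define q where "q = p0 + (\<sigma>*t) *\<^sub>R v"
        have at: "\<bar>\<sigma>*t\<bar> = t" using \<sigma> t by auto
        have qS: "q \<in> std_simplex" unfolding q_def v_def
          by (rule simplex_shift[OF p0]) (simp add: at; meson less_le_trans mg(2) t(2))
        have nq: "norm (q - p0) \<le> 2*t"
        proof -
          have "norm (q - p0) = t * norm v" unfolding q_def using at by simp
          also have "\<dots> \<le> t * 2" unfolding v_def using t by (intro mult_left_mono norm_axis_diff) auto
          finally show ?thesis by simp
        qed
        have qB: "q \<in> ball p0 r" using nq t by (simp add: dist_norm norm_minus_commute)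
        have Lq: "L (q - p0) = \<sigma>*t * L v" unfolding q_def using lin by (simp add: linear_scale)
        have "norm (\<Phi>0 q - \<Phi>0 p0 - L (q - p0)) \<le> \<gamma>/8 * norm (q - p0)"
          using dd qS nq t by auto
        also have "\<dots> \<le> \<gamma>/8 * (2*t)" using nq \<gamma> by (intro mult_left_mono) auto
        finally have "- (\<Phi>0 q - \<Phi>0 p0 - L (q - p0)) \<le> \<gamma>/8 * (2*t)"
          unfolding real_norm_def by (rule abs_le_D2)
        then have dq: "\<Phi>0 q \<ge> \<Phi>0 p0 + \<sigma>*t * L v - \<gamma>*t/4" using Lq by linarith
        have ev: "eventually (\<lambda>m. \<eta> m < t*\<gamma>/4) sequentially"
          using \<eta>0 t \<gamma> by (intro order_tendstoD(2)) auto
        show ?thesis using ev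
        proof (rule eventually_mono)
          fix m assume \<eta>m: "\<eta> m < t*\<gamma>/4"
          have 1: "\<Phi>s m q > \<Phi>0 q - inverse (real (Suc m))" using close[of q m] qB qS by auto
          have 2: "\<Phi>s m q \<le> (\<Sum>k\<in>UNIV. c m k * q $ k)"
            unfolding c_def by (rule gen_ineq[OF gen ps qS])
          have 3: "(\<Sum>k\<in>UNIV. c m k * q $ k) = (\<Sum>k\<in>UNIV. c m k * p0 $ k) + \<sigma>*t * (c m i - c m j)"
            unfolding q_def v_def by (rule sum_axis_shift)
          have gs: "(\<Sum>k\<in>UNIV. ps m $ k * c m k) = \<Phi>s m (ps m)"
            unfolding c_def by (rule gen_sum[OF gen ps])
          have 4: "(\<Sum>k\<in>UNIV. c m k * p0 $ k) = \<Phi>s m (ps m) + (\<Sum>k\<in>UNIV. c m k * (p0$k - ps m $ k))"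
            using gs by (simp add: algebra_simps sum_subtractf)
          have e1: "\<Phi>0 p0 - \<Phi>s m (ps m) \<le> \<bar>\<Phi>s m (ps m) - \<Phi>0 p0\<bar>" by simp
          have e2: "- (\<Sum>k\<in>UNIV. c m k * (p0$k - ps m $ k)) \<le> \<bar>\<Sum>k\<in>UNIV. c m k * (p0$k - ps m $ k)\<bar>" by simp
          have "\<sigma>*t*(c m i - c m j) - \<sigma>*t * L v > - (t*\<gamma>)/2"
            using 1 2 3 4 dq \<eta>m e1 e2 mult.commute[of \<gamma> t] unfolding \<eta>_def by linarith
          then have "t * (\<sigma> * (c m i - c m j - L v)) > t * (-\<gamma>/2)" by (simp add: algebra_simps)
          then show "\<sigma> * (c m i - c m j - L v) > -\<gamma>/2" by (meson mult_less_cancel_left_pos t(1))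
        qed
      qed
      show "eventually (\<lambda>m. \<bar>c m i - c m j - L v\<bar> < \<gamma>) sequentially"
        using eventually_conj[OF key[of 1] key[of "-1"]] 
        by (rule eventually_mono) (use \<gamma> in auto)
    qed
  qed
  define C where "C k = \<Phi>0 p0 - (\<Sum>i\<in>UNIV. p0$i * L (axis i 1 - axis k 1))" for k
  have cl: "(\<lambda>m. c m k) \<longlonglongrightarrow> C k" for k
  proof -
    have id: "c m k = \<Phi>s m (ps m) - (\<Sum>i\<in>UNIV. ps m $ i * (c m i - c m k))" for m
    proof -
      have gs: "(\<Sum>i\<in>UNIV. ps m $ i * c m i) = \<Phi>s m (ps m)"
        unfolding c_def by (rule gen_sum[OF gen ps])
      have s1: "(\<Sum>i\<in>UNIV. ps m $ i) = 1" using ps[of m] unfolding std_simplex_def by auto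
      have "(\<Sum>i\<in>UNIV. ps m $ i * (c m i - c m k)) = (\<Sum>i\<in>UNIV. ps m $ i * c m i) - (\<Sum>i\<in>UNIV. ps m $ i) * c m k"
        by (simp add: algebra_simps sum_subtractf sum_distrib_right sum_distrib_left)
      then show ?thesis using gs s1 by simp
    qed
    have "(\<lambda>m. \<Phi>s m (ps m) - (\<Sum>i\<in>UNIV. ps m $ i * (c m i - c m k))) \<longlonglongrightarrow> C k"
      unfolding C_def by (intro tendsto_diff \<Phi>F tendsto_sum tendsto_mult pk D)
    then show ?thesis using id by simp
  qed
  show ?thesis
  proof (rule vec_tendstoI)
    fix k
    have id: "\<pi>s m (ps m) $ k = ps m $ k * c m k / \<Phi>s m (ps m)" for m
      unfolding c_def using pspos[of m k] \<Phi>spos[of m] by (simp add: field_simps)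
    have "(\<lambda>m. ps m $ k * c m k / \<Phi>s m (ps m)) \<longlonglongrightarrow> p0 $ k * C k / \<Phi>0 p0"
      using \<Phi>0pos by (intro tendsto_divide tendsto_mult pk cl \<Phi>F) auto
    then show "(\<lambda>m. \<pi>s m (ps m) $ k) \<longlonglongrightarrow> (\<chi> k. p0$k * (\<Phi>0 p0 - (\<Sum>i\<in>UNIV. p0$i * L (axis i 1 - axis k 1))) / \<Phi>0 p0) $ k"
      using id by (simp add: C_def)
  qed
qed

theorem lemma4p7:
  fixes \<pi>0 :: "real ^ 'n \<Rightarrow> real ^ 'n" and \<Phi>0 :: "real ^ 'n \<Rightarrow> real"
    and p0 :: "real ^ 'n" and K :: "(real ^ 'n) set" and \<epsilon> :: real
  assumes n2: "CARD('n) \<ge> 2"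
    and gen0: "generated_by \<pi>0 \<Phi>0"
    and p0: "p0 \<in> std_simplex"
    and diff: "\<Phi>0 differentiable (at p0 within std_simplex)"
    and eps: "\<epsilon> > 0"
    and Ksub: "K \<subseteq> std_simplex" and Kcomp: "compact K"
    and Knbhd: "\<exists>r>0. ball p0 r \<inter> std_simplex \<subseteq> K"
  shows "\<exists>\<delta>>0. \<forall>(\<pi> :: real ^ 'n \<Rightarrow> real ^ 'n) \<Phi>.
           generated_by \<pi> \<Phi> \<and> (\<forall>p\<in>K. \<bar>\<Phi> p - \<Phi>0 p\<bar> < \<delta>) \<longrightarrow>
           (SUP p\<in>{p\<in>std_simplex. norm (p - p0) < \<delta>}. norm (\<pi> p - \<pi>0 p0)) < \<epsilon>"
proof (rule ccontr)
  assume neg: "\<not> ?thesis"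
  obtain L where der: "(\<Phi>0 has_derivative L) (at p0 within std_simplex)"
    using diff unfolding differentiable_def by blast
  obtain r where r: "r > 0" "ball p0 r \<inter> std_simplex \<subseteq> K" using Knbhd by blast
  have \<Phi>0pos: "\<Phi>0 p0 > 0" using gen0 p0 unfolding generated_by_def by auto
  define X where "X = (\<chi> k. p0$k * (\<Phi>0 p0 - (\<Sum>i\<in>UNIV. p0$i * L (axis i 1 - axis k 1))) / \<Phi>0 p0)"
  have "(\<lambda>m::nat. \<pi>0 p0) \<longlonglongrightarrow> X"
    unfolding X_def
    by (rule core[OF p0 der \<Phi>0pos r(1), of "\<lambda>m. \<pi>0" "\<lambda>m. \<Phi>0" "\<lambda>m. p0"]) (use gen0 p0 in auto)
  then have Xeq: "\<pi>0 p0 = X" by (simp add: LIMSEQ_const_iff)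
  have "\<forall>m. \<exists>\<pi> \<Phi> p. generated_by \<pi> \<Phi> \<and> (\<forall>q\<in>K. \<bar>\<Phi> q - \<Phi>0 q\<bar> < inverse (real (Suc m)))
      \<and> p \<in> std_simplex \<and> norm (p - p0) < inverse (real (Suc m)) \<and> norm (\<pi> p - \<pi>0 p0) > \<epsilon>/2"
  proof
    fix m
    define \<delta> where "\<delta> = inverse (real (Suc m))"
    have \<delta>: "\<delta> > 0" unfolding \<delta>_def by simp
    from neg \<delta> obtain \<pi> \<Phi> where g: "generated_by \<pi> \<Phi>" and cl: "\<forall>p\<in>K. \<bar>\<Phi> p - \<Phi>0 p\<bar> < \<delta>"
      and sup: "\<not> (SUP p\<in>{p\<in>std_simplex. norm (p - p0) < \<delta>}. norm (\<pi> p - \<pi>0 p0)) < \<epsilon>"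
      by blast
    show "\<exists>\<pi> \<Phi> p. generated_by \<pi> \<Phi> \<and> (\<forall>q\<in>K. \<bar>\<Phi> q - \<Phi>0 q\<bar> < inverse (real (Suc m)))
      \<and> p \<in> std_simplex \<and> norm (p - p0) < inverse (real (Suc m)) \<and> norm (\<pi> p - \<pi>0 p0) > \<epsilon>/2"
    proof (rule ccontr)
      assume no: "\<not> ?thesis"
      have "(SUP p\<in>{p\<in>std_simplex. norm (p - p0) < \<delta>}. norm (\<pi> p - \<pi>0 p0)) \<le> \<epsilon>/2"
      proof (rule cSUP_least)
        show "{p\<in>std_simplex. norm (p - p0) < \<delta>} \<noteq> {}" using p0 \<delta> by auto
        fix p assume "p \<in> {p\<in>std_simplex. norm (p - p0) < \<delta>}"
        then show "norm (\<pi> p - \<pi>0 p0) \<le> \<epsilon>/2" using no g cl unfolding \<delta>_def by force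
      qed
      then show False using sup eps by linarith
    qed
  qed
  then obtain \<pi>s \<Phi>s ps where
    g: "\<And>m. generated_by (\<pi>s m) (\<Phi>s m)" and
    cl: "\<And>m. \<forall>q\<in>K. \<bar>\<Phi>s m q - \<Phi>0 q\<bar> < inverse (real (Suc m))" and
    ps: "\<And>m. ps m \<in> std_simplex" and
    pn: "\<And>m. norm (ps m - p0) < inverse (real (Suc m))" and
    far: "\<And>m. norm (\<pi>s m (ps m) - \<pi>0 p0) > \<epsilon>/2"
    by metis
  have "(\<lambda>m. ps m - p0) \<longlonglongrightarrow> 0"
    by (rule Lim_null_comparison[OF _ LIMSEQ_inverse_real_of_nat])
       (rule always_eventually, use pn in \<open>auto intro: less_imp_le simp del: of_nat_Suc\<close>)
  then have lim: "ps \<longlonglongrightarrow> p0" by (simp add: LIM_zero_cancel)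
  have "(\<lambda>m. \<pi>s m (ps m)) \<longlonglongrightarrow> X"
    unfolding X_def
    by (rule core[OF p0 der \<Phi>0pos r(1) g _ ps lim]) (use cl r(2) in blast)
  then have "eventually (\<lambda>m. dist (\<pi>s m (ps m)) (\<pi>0 p0) < \<epsilon>/2) sequentially"
    using eps Xeq unfolding tendsto_iff by (metis half_gt_zero)
  then obtain N where "\<forall>m\<ge>N. dist (\<pi>s m (ps m)) (\<pi>0 p0) < \<epsilon>/2"
    unfolding eventually_sequentially by blast
  then show False using far[of N] by (auto simp: dist_norm)
qed

end
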